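(* Let $s,k$ be integers such that $s$ is prime and $2 \le k \le s$. Then \[ A(sk, 2k-2, k) ~\ge~ s^2 + k\cdot A(s, 2k-2, k). \]
   Context: $A(n,d,w)$ denotes the maximum number of binary words of length $n$ and Hamming weight $w$ that are pairwise at Hamming distance at least $d$; equivalently $A(n,2k-2,k)$ is the maximum number of pairwise edge-disjoint copies of $K_k$ in the complete graph $K_n$. *)

theory Defs
  imports Main "HOL-Computational_Algebra.Primes"
begin

text \<open>A binary word of length n is identified with its support, a subset of {..<n};
  its Hamming weight is the cardinality of the support, and the Hamming distance
  of two words is the cardinality of the symmetric difference of their supports.\<close>

definition hamming_dist :: "nat set \<Rightarrow> nat set \<Rightarrow> nat" where
  "hamming_dist x y = card ((x - y) \<union> (y - x))"

definition cw_code :: "nat \<Rightarrow> nat \<Rightarrow> nat \<Rightarrow> nat set set \<Rightarrow> bool" where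
  "cw_code n d w C \<longleftrightarrow>
     (\<forall>x\<in>C. x \<subseteq> {..<n} \<and> card x = w) \<and>
     (\<forall>x\<in>C. \<forall>y\<in>C. x \<noteq> y \<longrightarrow> d \<le> hamming_dist x y)"

definition A :: "nat \<Rightarrow> nat \<Rightarrow> nat \<Rightarrow> nat" where
  "A n d w = Max (card ` {C. cw_code n d w C})"

end

theory Submission
  imports Defs
begin

lemma divmod_s:
  fixes s i x :: nat
  assumes "x < s"
  shows "(i*s+x) div s = i" "(i*s+x) mod s = x"
  using assms by auto

lemma code_fin: "finite {C. cw_code n d w C}"
proof -
  have "{C. cw_code n d w C} \<subseteq> Pow (Pow {..<n})"
    unfolding cw_code_def by auto
  then show ?thesis by (rule finite_subset) auto
qed

lemma A_ge: assumes "cw_code n d w C" shows "card C \<le> A n d w"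
  unfolding A_def using assms code_fin by (intro Max_ge) auto

lemma A_att: "\<exists>C. cw_code n d w C \<and> card C = A n d w"
proof -
  have "cw_code n d w {}" unfolding cw_code_def by auto
  then have "A n d w \<in> card ` {C. cw_code n d w C}"
    unfolding A_def using code_fin by (intro Max_in) auto
  then show ?thesis by auto
qed

lemma hd_eq:
  assumes "finite x" "finite y" "card x = k" "card y = k"
  shows "hamming_dist x y = 2 * (k - card (x \<inter> y))"
proof -
  have d: "(x - y) \<inter> (y - x) = {}" by auto
  have "card (x - y) = k - card (x \<inter> y)"
    using assms by (metis card_Diff_subset_Int Int_lower2 finite_Int inf_commute)
  moreover have "card (y - x) = k - card (x \<inter> y)"
    using assms by (metis card_Diff_subset_Int Int_lower2 finite_Int inf_commute)
  ultimately show ?thesis unfolding hamming_dist_def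
    using assms by (simp add: card_Un_disjoint d)
qed

lemma cw_iff:
  assumes "\<forall>x\<in>C. x \<subseteq> {..<n} \<and> card x = k"
  shows "cw_code n (2*k-2) k C \<longleftrightarrow> (\<forall>x\<in>C. \<forall>y\<in>C. x \<noteq> y \<longrightarrow> card (x \<inter> y) \<le> 1)"
proof -
  have "\<And>x y. x \<in> C \<Longrightarrow> y \<in> C \<Longrightarrow> (2*k-2 \<le> hamming_dist x y) = (card (x \<inter> y) \<le> 1)"
  proof -
    fix x y assume xy: "x \<in> C" "y \<in> C"
    have f: "finite x" "finite y" using xy assms by (meson finite_lessThan finite_subset)+
    have ck: "card x = k" "card y = k" using xy assms by auto
    have "card (x \<inter> y) \<le> k" using f ck by (metis card_mono Int_lower1)
    then show "(2*k-2 \<le> hamming_dist x y) = (card (x \<inter> y) \<le> 1)"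
      using hd_eq[OF f ck] by auto
  qed
  then show ?thesis using assms unfolding cw_code_def by auto
qed

lemma small_dvd:
  fixes d m :: int
  assumes "m dvd d" "\<bar>d\<bar> < m" shows "d = 0"
proof (rule ccontr)
  assume "d \<noteq> 0"
  then have "\<bar>m\<bar> \<le> \<bar>d\<bar>" using assms(1) dvd_imp_le_int by blast
  then show False using assms(2) by linarith
qed

lemma line_inter:
  fixes s k a b a' b' :: nat
  assumes p: "prime s" and ks: "k \<le> s" and ab: "a < s" "b < s" "a' < s" "b' < s"
    and ne: "(a, b) \<noteq> (a', b')"
  shows "card ((\<lambda>i. i*s + (a*i+b) mod s) ` {..<k} \<inter> (\<lambda>i. i*s + (a'*i+b') mod s) ` {..<k}) \<le> 1"
proof -
  have s0: "s > 0" using p prime_gt_0_nat by blast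
  have key: "i = j" if i: "i < k" and j: "j < k"
    and e1: "(a*i+b) mod s = (a'*i+b') mod s" and e2: "(a*j+b) mod s = (a'*j+b') mod s" for i j
  proof (rule ccontr)
    assume ij: "i \<noteq> j"
    have c1: "int s dvd (int a*int i+int b) - (int a'*int i+int b')"
      using e1 by (metis mod_eq_dvd_iff of_nat_add of_nat_mult zmod_int)
    have c2: "int s dvd (int a*int j+int b) - (int a'*int j+int b')"
      using e2 by (metis mod_eq_dvd_iff of_nat_add of_nat_mult zmod_int)
    have "int s dvd ((int a*int i+int b) - (int a'*int i+int b')) - ((int a*int j+int b) - (int a'*int j+int b'))"
      using c1 c2 dvd_diff by blast
    moreover have "((int a*int i+int b) - (int a'*int i+int b')) - ((int a*int j+int b) - (int a'*int j+int b'))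
       = (int a - int a') * (int i - int j)" by (simp add: algebra_simps)
    ultimately have "int s dvd (int a - int a') * (int i - int j)" by simp
    moreover have "prime (int s)" using p by simp
    ultimately have "int s dvd (int a - int a') \<or> int s dvd (int i - int j)"
      using prime_dvd_mult_iff by blast
    moreover have "\<not> int s dvd (int i - int j)"
    proof
      assume "int s dvd (int i - int j)"
      moreover have "\<bar>int i - int j\<bar> < int s" using i j ks by auto
      moreover have "int i - int j \<noteq> 0" using ij by auto
      ultimately show False using small_dvd by blast
    qed
    ultimately have da: "int s dvd (int a - int a')" by blast
    have "a = a'"
    proof (rule ccontr)
      assume "a \<noteq> a'"
      moreover have "\<bar>int a - int a'\<bar> < int s" using ab by auto
      ultimately show False using da small_dvd[of "int s" "int a - int a'"] by simp
    qed
    then have db: "int s dvd (int b - int b')" using c1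
      by (metis add_diff_cancel_left)
    have "b = b'"
    proof (rule ccontr)
      assume "b \<noteq> b'"
      moreover have "\<bar>int b - int b'\<bar> < int s" using ab by auto
      ultimately show False using db small_dvd[of "int s" "int b - int b'"] by simp
    qed
    with \<open>a = a'\<close> ne show False by simp
  qed
  show ?thesis
  proof (subst card_le_Suc0_iff_eq[unfolded One_nat_def[symmetric]])
    show "finite ((\<lambda>i. i*s + (a*i+b) mod s) ` {..<k} \<inter> (\<lambda>i. i*s + (a'*i+b') mod s) ` {..<k})" by simp
    show "\<forall>x\<in>(\<lambda>i. i*s + (a*i+b) mod s) ` {..<k} \<inter> (\<lambda>i. i*s + (a'*i+b') mod s) ` {..<k}.
          \<forall>y\<in>(\<lambda>i. i*s + (a*i+b) mod s) ` {..<k} \<inter> (\<lambda>i. i*s + (a'*i+b') mod s) ` {..<k}. x = y"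
    proof (intro ballI)
      fix x y
      assume x: "x \<in> (\<lambda>i. i*s + (a*i+b) mod s) ` {..<k} \<inter> (\<lambda>i. i*s + (a'*i+b') mod s) ` {..<k}"
        and y: "y \<in> (\<lambda>i. i*s + (a*i+b) mod s) ` {..<k} \<inter> (\<lambda>i. i*s + (a'*i+b') mod s) ` {..<k}"
      obtain i i2 where i: "i < k" "i2 < k" "x = i*s + (a*i+b) mod s" "x = i2*s + (a'*i2+b') mod s"
        using x by auto
      obtain j j2 where j: "j < k" "j2 < k" "y = j*s + (a*j+b) mod s" "y = j2*s + (a'*j2+b') mod s"
        using y by auto
      have m1: "(a*i+b) mod s < s" "(a'*i2+b') mod s < s" "(a*j+b) mod s < s" "(a'*j2+b') mod s < s"
        using s0 by auto
      have "i = i2" "(a*i+b) mod s = (a'*i2+b') mod s"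
        using divmod_s[OF m1(1), of i] divmod_s[OF m1(2), of i2] i by metis+
      moreover have "j = j2" "(a*j+b) mod s = (a'*j2+b') mod s"
        using divmod_s[OF m1(3), of j] divmod_s[OF m1(4), of j2] j by metis+
      ultimately have "i = j" using key i j by blast
      then show "x = y" using i j by simp
    qed
  qed
qed


theorem lemma2:
  fixes s k :: nat
  assumes "prime s" and "2 \<le> k" and "k \<le> s"
  shows "A (s * k) (2 * k - 2) k \<ge> s ^ 2 + k * A s (2 * k - 2) k"
proof -
  have s0: "s > 0" using assms(1) prime_gt_0_nat by blast
  obtain C0 where C0: "cw_code s (2*k-2) k C0" "card C0 = A s (2*k-2) k"
    using A_att by blast
  have C0w: "\<forall>x\<in>C0. x \<subseteq> {..<s} \<and> card x = k" using C0(1) unfolding cw_code_def by blast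
  have C0i: "\<forall>x\<in>C0. \<forall>y\<in>C0. x \<noteq> y \<longrightarrow> card (x \<inter> y) \<le> 1"
    using C0(1) cw_iff[OF C0w] by blast
  have finC0: "finite C0"
    using C0w by (intro finite_subset[of C0 "Pow {..<s}"]) auto
  define L where "L = (\<lambda>(a,b). (\<lambda>i. i*s + (a*i+b) mod s) ` {..<k})"
  define g where "g = (\<lambda>i x::nat. i*s + x)"
  define Col where "Col = (\<lambda>i. (\<lambda>c. g i ` c) ` C0)"
  define Lines where "Lines = L ` ({..<s} \<times> {..<s})"
  define F where "F = Lines \<union> (\<Union>i<k. Col i)"
  have injg: "inj (g i)" for i unfolding g_def inj_def by auto
  have Lmem: "p \<in> L ab \<longleftrightarrow> p div s < k \<and> p = (p div s)*s + (fst ab*(p div s)+snd ab) mod s" for p ab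
  proof (cases ab)
    case (Pair a b)
    show ?thesis unfolding L_def Pair using divmod_s s0 by auto
  qed
  have Lel: "j*s + (fst ab*j+snd ab) mod s \<in> L ab" if "j < k" for j ab
    using that unfolding L_def by (auto simp: case_prod_beta)
  have Lcard: "card (L ab) = k" for ab
  proof -
    have "inj_on (\<lambda>i. i*s + (fst ab*i+snd ab) mod s) {..<k}"
      unfolding inj_on_def using divmod_s s0 by (metis mod_less_divisor)
    then show ?thesis unfolding L_def by (simp add: case_prod_beta card_image)
  qed
  have Lsub: "L ab \<subseteq> {..<s*k}" for ab
  proof
    fix p assume "p \<in> L ab"
    then have "p div s < k" "p = (p div s)*s + (fst ab*(p div s)+snd ab) mod s" using Lmem by blast+
    moreover have "(fst ab*(p div s)+snd ab) mod s < s" using s0 by simp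
    ultimately have "p < (p div s)*s + s" by linarith
    also have "\<dots> \<le> s*k" using \<open>p div s < k\<close>
      by (metis add.commute mult.commute mult_Suc_right mult_le_mono2 Suc_leI)
    finally show "p \<in> {..<s*k}" by simp
  qed
  have Linter: "card (L ab \<inter> L ab') \<le> 1" if "ab \<in> {..<s}\<times>{..<s}" "ab' \<in> {..<s}\<times>{..<s}" "ab \<noteq> ab'" for ab ab'
  proof -
    obtain a b a' b' where e: "ab = (a,b)" "ab' = (a',b')" by fastforce
    show ?thesis using that line_inter[OF assms(1) assms(3), of a b a' b'] unfolding L_def e by auto
  qed
  have Linj: "inj_on L ({..<s}\<times>{..<s})"
  proof (rule inj_onI)
    fix ab ab' assume h: "ab \<in> {..<s}\<times>{..<s}" "ab' \<in> {..<s}\<times>{..<s}" "L ab = L ab'"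
    show "ab = ab'"
    proof (rule ccontr)
      assume "ab \<noteq> ab'"
      then have "card (L ab \<inter> L ab') \<le> 1" using Linter h by blast
      then show False using h(3) Lcard[of ab] assms(2) by simp
    qed
  qed
  have colmem: "p \<in> g i ` c \<Longrightarrow> c \<in> C0 \<Longrightarrow> p div s = i" for p i c
    using C0w divmod_s unfolding g_def by fastforce
  have Colcard: "card (Col i) = card C0" for i
    unfolding Col_def by (rule card_image) (meson inj_onI inj_image_eq_iff injg)
  have Colw: "x \<subseteq> {..<s*k} \<and> card x = k" if ix: "i < k" "x \<in> Col i" for i x
  proof -
    obtain c where c: "c \<in> C0" "x = g i ` c" using ix unfolding Col_def by blast
    have "card x = k" using c C0w card_image injg by (metis inj_on_subset subset_UNIV)
    moreover have "x \<subseteq> {..<s*k}"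
    proof
      fix p assume "p \<in> x"
      then obtain y where "y \<in> c" "p = i*s + y" using c unfolding g_def by blast
      then have "y < s" using c C0w by blast
      then have "p < i*s + s" using \<open>p = i*s + y\<close> by simp
      also have "\<dots> \<le> s*k" using \<open>i < k\<close>
        by (metis add.commute mult.commute mult_Suc_right mult_le_mono2 Suc_leI)
      finally show "p \<in> {..<s*k}" by simp
    qed
    ultimately show ?thesis by blast
  qed
  have ne_col: "g i ` c \<noteq> {}" if "c \<in> C0" for i c
    using that C0w assms(2) by fastforce
  have LColdisj: "Lines \<inter> Col i = {}" for i
  proof -
    have "L ab \<noteq> g i ` c" if "c \<in> C0" for ab c
    proof
      assume e: "L ab = g i ` c"
      have "0 < k" "1 < k" using assms(2) by auto
      have m: "(fst ab*j+snd ab) mod s < s" for j using s0 by simp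
      have "0*s + (fst ab*0+snd ab) mod s \<in> L ab" using Lel \<open>0<k\<close> by blast
      then have "0 = i" using colmem[OF _ that] e divmod_s[OF m[of 0]] by metis
      have "1*s + (fst ab*1+snd ab) mod s \<in> L ab" using Lel \<open>1<k\<close> by blast
      then have "1 = i" using colmem[OF _ that] e divmod_s[OF m[of 1]] by metis
      with \<open>0 = i\<close> show False by simp
    qed
    then show ?thesis unfolding Lines_def Col_def by blast
  qed
  have Coldisj: "Col i \<inter> Col j = {}" if "i \<noteq> j" for i j
  proof -
    have "g i ` c \<noteq> g j ` c'" if "c \<in> C0" "c' \<in> C0" for c c'
    proof
      assume e: "g i ` c = g j ` c'"
      from ne_col[OF \<open>c \<in> C0\<close>] obtain p where "p \<in> g i ` c" by blast
      then show False using colmem[OF _ that(1)] colmem[OF _ that(2)] e \<open>i \<noteq> j\<close> by metis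
    qed
    then show ?thesis unfolding Col_def by blast
  qed
  have Fw: "\<forall>x\<in>F. x \<subseteq> {..<s*k} \<and> card x = k"
    unfolding F_def Lines_def using Lsub Lcard Colw by blast
  have Fi: "\<forall>x\<in>F. \<forall>y\<in>F. x \<noteq> y \<longrightarrow> card (x \<inter> y) \<le> 1"
  proof (intro ballI impI)
    fix x y assume x: "x \<in> F" and y: "y \<in> F" and xy: "x \<noteq> y"
    have LC: "card (L ab \<inter> g i ` c) \<le> 1" if "c \<in> C0" for ab i c
    proof -
      have "L ab \<inter> g i ` c \<subseteq> {i*s + (fst ab*i+snd ab) mod s}"
      proof
        fix p assume "p \<in> L ab \<inter> g i ` c"
        then show "p \<in> {i*s + (fst ab*i+snd ab) mod s}"
          using Lmem colmem[OF _ that] by (metis IntD1 IntD2 singletonI)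
      qed
      then have "card (L ab \<inter> g i ` c) \<le> card {i*s + (fst ab*i+snd ab) mod s}"
        by (rule card_mono[rotated]) simp
      then show ?thesis by simp
    qed
    have CC: "card (g i ` c \<inter> g j ` c') \<le> 1" if "c \<in> C0" "c' \<in> C0" "g i ` c \<noteq> g j ` c'" for i j c c'
    proof (cases "i = j")
      case True
      then have "g i ` c \<inter> g j ` c' = g i ` (c \<inter> c')" using injg by (simp add: image_Int)
      moreover have "c \<noteq> c'" using that True by blast
      moreover have "card (g i ` (c \<inter> c')) = card (c \<inter> c')"
        by (rule card_image) (meson injg inj_on_subset subset_UNIV)
      moreover have "card (c \<inter> c') \<le> 1" using C0i that(1,2) \<open>c \<noteq> c'\<close> by blast
      ultimately show ?thesis by simp
    next
      case False
      have "p \<notin> g i ` c \<inter> g j ` c'" for p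
      proof
        assume "p \<in> g i ` c \<inter> g j ` c'"
        then have "p div s = i" "p div s = j" using colmem[OF _ that(1)] colmem[OF _ that(2)] by auto
        then show False using False by simp
      qed
      then have "g i ` c \<inter> g j ` c' = {}" by blast
      then show ?thesis by simp
    qed
    show "card (x \<inter> y) \<le> 1"
    proof -
      have xL: "(\<exists>ab\<in>{..<s}\<times>{..<s}. x = L ab) \<or> (\<exists>i c. c \<in> C0 \<and> x = g i ` c)"
        using x unfolding F_def Lines_def Col_def by blast
      have yL: "(\<exists>ab\<in>{..<s}\<times>{..<s}. y = L ab) \<or> (\<exists>i c. c \<in> C0 \<and> y = g i ` c)"
        using y unfolding F_def Lines_def Col_def by blast
      show ?thesis
      proof (cases "\<exists>ab\<in>{..<s}\<times>{..<s}. x = L ab")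
        case True
        then obtain ab where ab: "ab \<in> {..<s}\<times>{..<s}" "x = L ab" by blast
        show ?thesis
        proof (cases "\<exists>ab\<in>{..<s}\<times>{..<s}. y = L ab")
          case True
          then obtain ab' where ab': "ab' \<in> {..<s}\<times>{..<s}" "y = L ab'" by blast
          have "ab \<noteq> ab'" using ab ab' xy by blast
          then show ?thesis using Linter[OF ab(1) ab'(1)] ab ab' by simp
        next
          case False
          then obtain i c where "c \<in> C0" "y = g i ` c" using yL by blast
          then show ?thesis using LC ab by simp
        qed
      next
        case False
        then obtain i c where ic: "c \<in> C0" "x = g i ` c" using xL by blast
        show ?thesis
        proof (cases "\<exists>ab\<in>{..<s}\<times>{..<s}. y = L ab")
          case True
          then obtain ab' where ab': "ab' \<in> {..<s}\<times>{..<s}" "y = L ab'" by blast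
          have "x \<inter> y = L ab' \<inter> g i ` c" using ic ab' by blast
          then show ?thesis using LC[OF ic(1)] by simp
        next
          case False
          then obtain j c' where "c' \<in> C0" "y = g j ` c'" using yL by blast
          then show ?thesis using CC[OF ic(1)] ic xy by simp
        qed
      qed
    qed
  qed
  have cwF: "cw_code (s*k) (2*k-2) k F" using cw_iff[OF Fw] Fi by blast
  have "card Lines = s^2" unfolding Lines_def using card_image[OF Linj] by (simp add: power2_eq_square)
  moreover have "card (\<Union>i<k. Col i) = k * card C0"
  proof -
    have "card (\<Union>i<k. Col i) = (\<Sum>i<k. card (Col i))"
    proof (rule card_UN_disjoint)
      show "finite {..<k}" by simp
      show "\<forall>i\<in>{..<k}. finite (Col i)" unfolding Col_def using finC0 by simp
      show "\<forall>i\<in>{..<k}. \<forall>j\<in>{..<k}. i \<noteq> j \<longrightarrow> Col i \<inter> Col j = {}" using Coldisj by blast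
    qed
    then show ?thesis using Colcard by simp
  qed
  moreover have "card F = card Lines + card (\<Union>i<k. Col i)"
    unfolding F_def
  proof (rule card_Un_disjoint)
    show "finite Lines" unfolding Lines_def by simp
    show "finite (\<Union>i<k. Col i)" unfolding Col_def using finC0 by simp
    show "Lines \<inter> (\<Union>i<k. Col i) = {}" using LColdisj by blast
  qed
  ultimately have "card F = s^2 + k * A s (2*k-2) k" using C0(2) by simp
  then show ?thesis using A_ge[OF cwF] by simp
qed

end
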